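(* Let $p>2$ be a prime, let $b\in\mathbb{Q}_p$ with $0<|b|_p<1$, let $f(x)=\frac{x^2}{bx+1}$ for $x\in\mathbb{Q}_p\setminus\{-\frac1b\}$, let $x_2=\frac{1}{1-b}$, and let $0<\rho<1$. Then for every ball $B_r(y)\subset S_\rho(x_2)$ with $r<\rho$, $$B_r(y)\cap B_r(f(y))=\emptyset.$$
   Context: $|\cdot|_p$ is the $p$-adic norm on $\mathbb{Q}_p$. For $c\in\mathbb{Q}_p$ and $r>0$: $B_r(c)=\{x\in\mathbb{Q}_p:|x-c|_p<r\}$ and $S_r(c)=\{x\in\mathbb{Q}_p:|x-c|_p=r\}$. *)

theory Defs
  imports Complex_Main "HOL-Computational_Algebra.Primes"
begin

definition padic_val_rat :: "nat \<Rightarrow> rat \<Rightarrow> int" where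
  "padic_val_rat p q =
     int (multiplicity (int p) (fst (quotient_of q)))
       - int (multiplicity (int p) (snd (quotient_of q)))"

definition padic_abs_rat :: "nat \<Rightarrow> rat \<Rightarrow> real" where
  "padic_abs_rat p q =
     (if q = 0 then 0 else real p powr (- real_of_int (padic_val_rat p q)))"

text \<open>We characterise it up to isometric
  isomorphism: a field of characteristic 0 with an absolute value that is
  non-archimedean, restricts to the p-adic absolute value on the rationals,
  in which the rationals are dense, and which is complete.
  Every such (K, nrm) is isometrically isomorphic to (Q_p, |.|_p).\<close>

definition is_padic_field :: "nat \<Rightarrow> ('a::field_char_0 \<Rightarrow> real) \<Rightarrow> bool" where
  "is_padic_field p nrm \<longleftrightarrow>
     (\<forall>x. nrm x = 0 \<longleftrightarrow> x = 0) \<and>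
     (\<forall>x. nrm x \<ge> 0) \<and>
     (\<forall>x y. nrm (x * y) = nrm x * nrm y) \<and>
     (\<forall>x y. nrm (x + y) \<le> max (nrm x) (nrm y)) \<and>
     (\<forall>q. nrm (of_rat q) = padic_abs_rat p q) \<and>
     (\<forall>x. \<forall>e>0. \<exists>q. nrm (x - of_rat q) < e) \<and>
     (\<forall>X :: nat \<Rightarrow> 'a.
        (\<forall>e>0. \<exists>N. \<forall>m\<ge>N. \<forall>n\<ge>N. nrm (X m - X n) < e) \<longrightarrow>
        (\<exists>L. \<forall>e>0. \<exists>N. \<forall>n\<ge>N. nrm (X n - L) < e))"

definition pball :: "('a::ab_group_add \<Rightarrow> real) \<Rightarrow> real \<Rightarrow> 'a \<Rightarrow> 'a set" where
  "pball nrm r c = {x. nrm (x - c) < r}"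

definition psphere :: "('a::ab_group_add \<Rightarrow> real) \<Rightarrow> real \<Rightarrow> 'a \<Rightarrow> 'a set" where
  "psphere nrm r c = {x. nrm (x - c) = r}"

end

theory Submission
  imports Defs
begin

lemma fyl: fixes b y x2 :: "'a::field_char_0"
  assumes "x2 = 1 / (1 - b)" "1 - b \<noteq> 0" "b * y + 1 \<noteq> 0"
  shows "y^2 / (b * y + 1) - y = y * (1 - b) * (y - x2) / (b * y + 1)"
proof -
  have h: "x2 * (1 - b) = 1" using assms(1,2) by simp
  have "y * (1 - b) * (y - x2) = y*y*(1-b) - y*(x2*(1-b))" by (simp add: algebra_simps)
  also have "\<dots> = y*y*(1-b) - y" using h by simp
  finally have e: "y * (1 - b) * (y - x2) = y*y*(1-b) - y" .
  then show ?thesis using assms(3) e by (simp add: field_simps power2_eq_square)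
qed

theorem lemma4p2:
  fixes p :: nat and nrm :: "'a::field_char_0 \<Rightarrow> real"
    and b :: 'a and f :: "'a \<Rightarrow> 'a" and x2 :: 'a and \<rho> :: real
  assumes "prime p" and "p > 2"
    and "is_padic_field p nrm"
    and "0 < nrm b" and "nrm b < 1"
    and "\<And>x. x \<noteq> - 1 / b \<Longrightarrow> f x = x^2 / (b * x + 1)"
    and "x2 = 1 / (1 - b)"
    and "0 < \<rho>" and "\<rho> < 1"
  shows "\<forall>y r. 0 < r \<and> r < \<rho> \<and> pball nrm r y \<subseteq> psphere nrm \<rho> x2 \<longrightarrow>
           pball nrm r y \<inter> pball nrm r (f y) = {}"
proof (intro allI impI)
  fix y r
  assume H: "0 < r \<and> r < \<rho> \<and> pball nrm r y \<subseteq> psphere nrm \<rho> x2"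
  note P = assms(3)[unfolded is_padic_field_def]
  have z: "\<And>x. nrm x = 0 \<longleftrightarrow> x = 0" using P[THEN conjunct1] by blast
  have nn: "\<And>x. nrm x \<ge> 0" using P[THEN conjunct2, THEN conjunct1] by blast
  have mul: "\<And>x y. nrm (x * y) = nrm x * nrm y"
    using P[THEN conjunct2, THEN conjunct2, THEN conjunct1] by blast
  have ua: "\<And>x y. nrm (x + y) \<le> max (nrm x) (nrm y)"
    using P[THEN conjunct2, THEN conjunct2, THEN conjunct2, THEN conjunct1] by blast
  have n1: "nrm 1 = 1"
  proof -
    have "nrm 1 = nrm 1 * nrm 1" using mul[of 1 1] by simp
    moreover have "nrm 1 \<noteq> 0" using z by simp
    ultimately show ?thesis by (metis mult_cancel_left1)
  qed
  have nm1: "nrm (-1) = 1"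
  proof -
    have "nrm (-1) * nrm (-1) = 1" using mul[of "-1" "-1"] n1 by simp
    moreover have "nrm (-1) \<ge> 0" using nn by simp
    moreover have "(nrm (-1) - 1) * (nrm (-1) + 1) = nrm (-1) * nrm (-1) - 1"
      by (simp add: algebra_simps)
    ultimately have "(nrm (-1) - 1) * (nrm (-1) + 1) = 0" by simp
    then have "nrm (-1) - 1 = 0 \<or> nrm (-1) + 1 = 0" by simp
    then show ?thesis using nn[of "-1"] by linarith
  qed
  have neg: "\<And>x. nrm (-x) = nrm x"
  proof -
    fix x :: 'a
    have "nrm (-x) = nrm ((-1) * x)" by simp
    also have "\<dots> = nrm x" using mul[of "-1" x] nm1 by simp
    finally show "nrm (-x) = nrm x" .
  qed
  have dom: "\<And>x y. nrm x < nrm y \<Longrightarrow> nrm (x + y) = nrm y"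
  proof -
    fix x y :: 'a assume a: "nrm x < nrm y"
    have "nrm y = nrm ((x + y) + (-x))" by simp
    also have "\<dots> \<le> max (nrm (x+y)) (nrm (-x))" by (rule ua)
    also have "\<dots> = max (nrm (x+y)) (nrm x)" using neg[of x] by simp
    finally have "nrm y \<le> nrm (x+y)" using a by linarith
    moreover have "nrm (x+y) \<le> nrm y" using ua[of x y] a by linarith
    ultimately show "nrm (x + y) = nrm y" by linarith
  qed
  have dv: "\<And>x y. y \<noteq> 0 \<Longrightarrow> nrm (x / y) = nrm x / nrm y"
  proof -
    fix x y :: 'a assume "y \<noteq> 0"
    then have "nrm (x / y) * nrm y = nrm x" using mul[of "x/y" y] by simp
    moreover have "nrm y \<noteq> 0" using z \<open>y \<noteq> 0\<close> by simp
    ultimately show "nrm (x / y) = nrm x / nrm y" by (simp add: field_simps)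
  qed
  have "nrm (-b) < nrm 1" using neg[of b] n1 assms(5) by linarith
  then have "nrm (-b + 1) = nrm 1" by (rule dom)
  then have nb: "nrm (1 - b) = 1" using n1 by (simp add: add.commute)
  have b1: "1 - b \<noteq> 0"
  proof
    assume "1 - b = 0"
    then have "nrm (1 - b) = 0" using z by blast
    then show False using nb by linarith
  qed
  have "nrm x2 = nrm 1 / nrm (1 - b)" using dv[OF b1, of 1] assms(7) by blast
  then have nx2: "nrm x2 = 1" using nb n1 by simp
  have n0: "nrm 0 = 0" using z by blast
  have yin: "y \<in> pball nrm r y" using H n0 unfolding pball_def by simp
  have ys: "nrm (y - x2) = \<rho>" using H yin unfolding psphere_def by blast
  have "nrm (y - x2) < nrm x2" using ys nx2 assms(9) by linarith
  then have "nrm ((y - x2) + x2) = nrm x2" by (rule dom)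
  then have ny: "nrm y = 1" using nx2 by simp
  have "nrm (b * y) < nrm 1" using mul[of b y] ny n1 assms(5) by simp
  then have "nrm (b * y + 1) = nrm 1" by (rule dom)
  then have nby: "nrm (b * y + 1) = 1" using n1 by simp
  have by0: "b * y + 1 \<noteq> 0"
  proof
    assume "b * y + 1 = 0"
    then have "nrm (b * y + 1) = 0" using z by blast
    then show False using nby by linarith
  qed
  have b0: "b \<noteq> 0"
  proof
    assume "b = 0"
    then have "nrm b = 0" using z by blast
    then show False using assms(4) by linarith
  qed
  have yne: "y \<noteq> - 1 / b"
  proof
    assume "y = - 1 / b"
    then have "b * y + 1 = 0" using b0 by simp
    then show False using by0 by simp
  qed
  have fy: "f y - y = y * (1 - b) * (y - x2) / (b * y + 1)"
    using assms(6)[OF yne] fyl[OF assms(7) b1 by0] by simp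
  have nfy: "nrm (f y - y) = \<rho>"
  proof -
    have "nrm (f y - y) = nrm (y * (1 - b) * (y - x2)) / nrm (b * y + 1)"
      using fy dv[OF by0] by simp
    also have "\<dots> = nrm y * nrm (1 - b) * nrm (y - x2)" using mul nby by simp
    also have "\<dots> = \<rho>" using ny nb ys by simp
    finally show ?thesis .
  qed
  show "pball nrm r y \<inter> pball nrm r (f y) = {}"
  proof (rule ccontr)
    assume "pball nrm r y \<inter> pball nrm r (f y) \<noteq> {}"
    then obtain w where w: "nrm (w - y) < r" "nrm (w - f y) < r" unfolding pball_def by blast
    have "f y - y = (w - y) + (-(w - f y))" by simp
    then have "nrm (f y - y) \<le> max (nrm (w - y)) (nrm (-(w - f y)))" using ua[of "w - y" "-(w - f y)"] by simp
    then have "nrm (f y - y) \<le> max (nrm (w - y)) (nrm (w - f y))" using neg[of "w - f y"] by simp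
    then show False using w nfy H by linarith
  qed
qed

end
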